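(* Let $r\in(-\infty,0)\cup(0,1)$, let $n\ge 2$, and let $Y$ be a positive semidefinite $n\times n$ matrix of rank one. Then the map $X\mapsto X^rYX^r$ from $\mathcal{P}_n$ to the $n\times n$ positive semidefinite matrices is not operator convex, i.e. there exist $X_1,X_2\in\mathcal{P}_n$ and $\lambda\in[0,1]$ such that $(\lambda X_1+(1-\lambda)X_2)^rY(\lambda X_1+(1-\lambda)X_2)^r\le \lambda X_1^rYX_1^r+(1-\lambda)X_2^rYX_2^r$ fails in the Loewner order.
   Context: $\mathcal{P}_n$ denotes the set of $n\times n$ positive definite complex matrices. *)

theory Defs
  imports "HOL-Analysis.Analysis"
begin

text \<open>Complex n x n matrices are modelled as complex^'n^'n, the dimension n = CARD('n).\<close>

definition cadjoint :: "complex^'n^'m \<Rightarrow> complex^'m^'n" where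
  "cadjoint A = (\<chi> i j. cnj (A $ j $ i))"

definition hermitian :: "complex^'n^'n \<Rightarrow> bool" where
  "hermitian A \<longleftrightarrow> cadjoint A = A"

definition qform :: "complex^'n^'n \<Rightarrow> complex^'n \<Rightarrow> complex" where
  "qform A x = (\<Sum>i\<in>UNIV. cnj (x $ i) * (A *v x) $ i)"

definition psd :: "complex^'n^'n \<Rightarrow> bool" where
  "psd A \<longleftrightarrow> hermitian A \<and> (\<forall>x. qform A x \<in> \<real> \<and> 0 \<le> Re (qform A x))"

definition posdef :: "complex^'n^'n \<Rightarrow> bool" where
  "posdef A \<longleftrightarrow> hermitian A \<and> (\<forall>x. x \<noteq> 0 \<longrightarrow> qform A x \<in> \<real> \<and> 0 < Re (qform A x))"

definition loewner_le :: "complex^'n^'n \<Rightarrow> complex^'n^'n \<Rightarrow> bool" where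
  "loewner_le A B \<longleftrightarrow> psd (B - A)"

definition unitary :: "complex^'n^'n \<Rightarrow> bool" where
  "unitary U \<longleftrightarrow> U ** cadjoint U = mat 1 \<and> cadjoint U ** U = mat 1"

text \<open>Real power of a positive definite matrix via its spectral decomposition
  X = U D U^*, X^r = U D^r U^* (independent of the chosen decomposition).\<close>
definition mat_rpow :: "complex^'n^'n \<Rightarrow> real \<Rightarrow> complex^'n^'n" where
  "mat_rpow X r = (SOME Z. \<exists>U (d :: 'n \<Rightarrow> real). unitary U \<and> (\<forall>i. 0 < d i) \<and>
      X = U ** (\<chi> i j. if i = j then complex_of_real (d i) else 0) ** cadjoint U \<and>
      Z = U ** (\<chi> i j. if i = j then complex_of_real (d i powr r) else 0) ** cadjoint U)"

end

theory Submission
  imports Defs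
begin


lemma tangent_aux:
  fixes r x :: real
  assumes x: "0 < x" "x \<noteq> 1" and r: "r \<noteq> 0" "r < 1"
  shows "r * (1 + r*(x-1) - x powr r) > 0"
proof -
  define h where "h = (\<lambda>y::real. 1 + r*(y-1) - y powr r)"
  have der: "DERIV h y :> r - r * y powr (r - 1)" if "0 < y" for y
    unfolding h_def using that by (auto intro!: derivative_eq_intros)
  have h1: "h 1 = 0" by (simp add: h_def)
  have r2: "r^2 > 0" using r by simp
  show ?thesis
  proof (cases "x > 1")
    case True
    obtain z where z: "1 < z" "z < x" "h x - h 1 = (x - 1) * (r - r * z powr (r - 1))"
      using MVT2[OF True, of h "\<lambda>y. r - r * y powr (r - 1)"] der by force
    define a where "a = z powr (r - 1)"
    have "a < 1" unfolding a_def using z r by (simp add: powr_less_one)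
    have hx: "h x = (x - 1) * (r - r * a)" using z(3) h1 unfolding a_def by simp
    have "r * h x = r^2 * ((x - 1) * (1 - a))" unfolding hx
      by (simp add: algebra_simps power2_eq_square)
    also have "\<dots> > 0" using r2 True \<open>a < 1\<close> by (intro mult_pos_pos) auto
    finally show ?thesis by (simp add: h_def)
  next
    case False
    hence xl: "x < 1" using x by simp
    obtain z where z: "x < z" "z < 1" "h 1 - h x = (1 - x) * (r - r * z powr (r - 1))"
      using MVT2[OF xl, of h "\<lambda>y. r - r * y powr (r - 1)"] der x by force
    define a where "a = z powr (r - 1)"
    have "a > 1" unfolding a_def using powr_less_mono2_neg[of "r-1" z 1] z r x by simp
    have hx: "h x = - ((1 - x) * (r - r * a))" using z(3) h1 unfolding a_def by simp
    have "r * h x = r^2 * ((1 - x) * (a - 1))" unfolding hx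
      by (simp add: algebra_simps power2_eq_square)
    also have "\<dots> > 0" using r2 xl \<open>a > 1\<close> by (intro mult_pos_pos) auto
    finally show ?thesis by (simp add: h_def)
  qed
qed

lemma kappa_ne:
  fixes r :: real
  assumes r: "r < 0 \<or> (0 < r \<and> r < 1)"
  shows "1/2 + 3 powr r / 2 - 2 powr r \<noteq> 0"
proof -
  have r0: "r \<noteq> 0" "r < 1" using r by auto
  have a: "r * (1 + r*(3/2-1) - (3/2) powr r) > 0" by (rule tangent_aux) (use r0 in auto)
  have b: "r * (1 + r*(1/2-1) - (1/2) powr r) > 0" by (rule tangent_aux) (use r0 in auto)
  have "r * (2 - (3/2) powr r - (1/2) powr r) > 0" using a b by (simp add: algebra_simps)
  hence "(3/2) powr r + (1/2) powr r \<noteq> 2"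
    by (metis add.commute cancel_comm_monoid_add_class.diff_cancel diff_diff_eq less_irrefl mult_zero_right)
  moreover have "(3/2) powr r = 3 powr r / 2 powr r" "(1/2::real) powr r = 1 / 2 powr r"
    by (simp_all add: powr_divide)
  moreover have p: "2 powr r > (0::real)" by simp
  ultimately have "3 powr r / 2 powr r + 1 / 2 powr r \<noteq> 2" by simp
  hence ne: "(3 powr r + 1) / 2 powr r \<noteq> 2" by (simp add: add_divide_distrib)
  show ?thesis
  proof
    assume "1/2 + 3 powr r / 2 - 2 powr r = 0"
    hence "3 powr r + 1 = 2 * 2 powr r" by simp
    hence "(3 powr r + 1) / 2 powr r = 2" using p by simp
    with ne show False by simp
  qed
qed


definition dg :: "('n \<Rightarrow> complex) \<Rightarrow> complex^'n^'n" where
  "dg f = (\<chi> i j. if i = j then f i else 0)"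

lemma cadjoint_cadjoint[simp]: "cadjoint (cadjoint A) = A"
  by (simp add: cadjoint_def vec_eq_iff)

lemma cadjoint_mult: "cadjoint (A ** B) = cadjoint B ** cadjoint A"
  by (simp add: cadjoint_def matrix_matrix_mult_def vec_eq_iff mult.commute)

lemma cadjoint_mat1[simp]: "cadjoint (mat 1 :: complex^'n^'n) = mat 1"
  by (simp add: cadjoint_def mat_def vec_eq_iff)

lemma cadjoint_dg_real: "cadjoint (dg (\<lambda>i. complex_of_real (d i))) = dg (\<lambda>i. complex_of_real (d i))"
  by (simp add: cadjoint_def dg_def vec_eq_iff)

lemma dg_left: "(dg f ** A) $ i $ j = f i * A $ i $ j"
proof -
  have "(dg f ** A) $ i $ j = (\<Sum>k\<in>UNIV. if i = k then f i * A $ i $ j else 0)"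
    unfolding dg_def matrix_matrix_mult_def vec_lambda_beta by (rule sum.cong) auto
  then show ?thesis by simp
qed

lemma dg_right: "(A ** dg f) $ i $ j = A $ i $ j * f j"
proof -
  have "(A ** dg f) $ i $ j = (\<Sum>k\<in>UNIV. if k = j then A $ i $ j * f j else 0)"
    unfolding dg_def matrix_matrix_mult_def vec_lambda_beta by (rule sum.cong) auto
  then show ?thesis by simp
qed

lemma dg_vec: "(dg f *v y) $ i = f i * y $ i"
proof -
  have "(dg f *v y) $ i = (\<Sum>k\<in>UNIV. if i = k then f i * y $ i else 0)"
    unfolding dg_def matrix_vector_mult_def vec_lambda_beta by (rule sum.cong) auto
  then show ?thesis by simp
qed

lemma unitary_mat1: "unitary (mat 1 :: complex^'n^'n)"
  by (simp add: unitary_def)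

lemma inner_adj: "(\<Sum>i\<in>UNIV. cnj (x$i) * (A *v z)$i) = (\<Sum>k\<in>UNIV. cnj ((cadjoint A *v x)$k) * z$k)"
proof -
  have "(\<Sum>i\<in>UNIV. cnj (x$i) * (A *v z)$i) = (\<Sum>i\<in>UNIV. \<Sum>k\<in>UNIV. cnj (x$i) * A$i$k * z$k)"
    by (simp add: matrix_vector_mult_def sum_distrib_left mult.assoc)
  also have "\<dots> = (\<Sum>k\<in>UNIV. \<Sum>i\<in>UNIV. cnj (x$i) * A$i$k * z$k)" by (rule sum.swap)
  also have "\<dots> = (\<Sum>k\<in>UNIV. cnj ((cadjoint A *v x)$k) * z$k)"
    by (simp add: matrix_vector_mult_def cadjoint_def sum_distrib_right sum_distrib_left mult_ac)
  finally show ?thesis .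
qed

lemma qform_conj:
  assumes "unitary U"
  shows "qform (U ** M ** cadjoint U) x = qform M (cadjoint U *v x)"
proof -
  have "(U ** M ** cadjoint U) *v x = U *v (M *v (cadjoint U *v x))"
    by (simp add: matrix_vector_mul_assoc matrix_mul_assoc)
  then show ?thesis unfolding qform_def using inner_adj[of x U] by simp
qed

lemma unitary_vec: "unitary U \<Longrightarrow> cadjoint U *v (U *v y) = y"
  by (simp add: unitary_def matrix_vector_mul_assoc)

lemma unitary_vec2: "unitary U \<Longrightarrow> U *v (cadjoint U *v y) = y"
  by (simp add: unitary_def matrix_vector_mul_assoc)

lemma cnj_sq: "cnj z * (complex_of_real a * z) = complex_of_real (a * (cmod z)^2)"
proof -
  have "z * cnj z = complex_of_real ((cmod z)^2)" by (rule complex_norm_square[symmetric])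
  then have "cnj z * (complex_of_real a * z) = complex_of_real a * complex_of_real ((cmod z)^2)"
    by (simp add: mult_ac)
  then show ?thesis by simp
qed

lemma qform_dg_real: "qform (dg (\<lambda>i. complex_of_real (d i))) y = complex_of_real (\<Sum>i\<in>UNIV. d i * (cmod (y$i))^2)"
  unfolding qform_def dg_vec
  by (simp add: cnj_sq)

lemma posdef_conj:
  fixes U :: "complex^'n^'n"
  assumes U: "unitary U" and d: "\<forall>i. 0 < d i"
  shows "posdef (U ** dg (\<lambda>i. complex_of_real (d i)) ** cadjoint U)"
  unfolding posdef_def hermitian_def
proof safe
  show "cadjoint (U ** dg (\<lambda>i. complex_of_real (d i)) ** cadjoint U) = U ** dg (\<lambda>i. complex_of_real (d i)) ** cadjoint U"
    by (simp add: cadjoint_mult cadjoint_dg_real matrix_mul_assoc)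
  fix x :: "complex^'n" assume x: "x \<noteq> 0"
  let ?y = "cadjoint U *v x"
  have "?y \<noteq> 0" using x unitary_vec2[OF U, of x] by auto
  then obtain k where k: "?y $ k \<noteq> 0" by (auto simp: vec_eq_iff)
  have q: "qform (U ** dg (\<lambda>i. complex_of_real (d i)) ** cadjoint U) x = complex_of_real (\<Sum>i\<in>UNIV. d i * (cmod (?y$i))^2)"
    by (simp add: qform_conj[OF U] qform_dg_real)
  show "qform (U ** dg (\<lambda>i. complex_of_real (d i)) ** cadjoint U) x \<in> \<real>" by (simp add: q)
  have "0 < d k * (cmod (?y$k))^2" using d k by simp
  also have "\<dots> \<le> (\<Sum>i\<in>UNIV. d i * (cmod (?y$i))^2)"
    by (rule member_le_sum) (use d in \<open>auto intro!: mult_nonneg_nonneg simp: less_imp_le\<close>)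
  finally show "0 < Re (qform (U ** dg (\<lambda>i. complex_of_real (d i)) ** cadjoint U) x)" by (simp add: q)
qed

abbreviation Dr :: "('n \<Rightarrow> real) \<Rightarrow> complex^'n^'n" where
  "Dr d \<equiv> dg (\<lambda>i. complex_of_real (d i))"

lemma rpow_unique:
  fixes U V :: "complex^'n^'n"
  assumes U: "unitary U" and V: "unitary V" and d: "\<forall>i. 0 < d i" and e: "\<forall>i. 0 < e i"
    and eq: "U ** Dr d ** cadjoint U = V ** Dr e ** cadjoint V"
  shows "U ** Dr (\<lambda>i. d i powr r) ** cadjoint U = V ** Dr (\<lambda>i. e i powr r) ** cadjoint V"
proof -
  define W where "W = cadjoint V ** U"
  have UU: "cadjoint U ** U = mat 1" "U ** cadjoint U = mat 1" using U by (auto simp: unitary_def)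
  have VV: "cadjoint V ** V = mat 1" "V ** cadjoint V = mat 1" using V by (auto simp: unitary_def)
  have "cadjoint V ** (U ** Dr d ** cadjoint U) ** U = cadjoint V ** (V ** Dr e ** cadjoint V) ** U"
    using eq by simp
  moreover have "cadjoint V ** (U ** Dr d ** cadjoint U) ** U = W ** Dr d ** (cadjoint U ** U)"
    by (simp add: W_def matrix_mul_assoc)
  moreover have "cadjoint V ** (V ** Dr e ** cadjoint V) ** U = (cadjoint V ** V) ** Dr e ** W"
    by (simp add: W_def matrix_mul_assoc)
  ultimately have "W ** Dr d = Dr e ** W" by (simp add: UU VV)
  hence ent: "W $ i $ j * complex_of_real (d j) = complex_of_real (e i) * W $ i $ j" for i j
    by (metis dg_left dg_right)
  have "W $ i $ j * complex_of_real (d j powr r) = complex_of_real (e i powr r) * W $ i $ j" for i j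
  proof (cases "W $ i $ j = 0")
    case False
    hence "complex_of_real (d j) = complex_of_real (e i)" using ent[of i j] by (simp add: mult.commute)
    hence "d j = e i" by simp
    then show ?thesis by (simp add: mult.commute)
  qed simp
  hence W2: "W ** Dr (\<lambda>i. d i powr r) = Dr (\<lambda>i. e i powr r) ** W"
    by (simp add: vec_eq_iff dg_left dg_right)
  have "V ** Dr (\<lambda>i. e i powr r) ** cadjoint V = V ** Dr (\<lambda>i. e i powr r) ** (cadjoint V ** (U ** cadjoint U))"
    by (simp add: UU)
  also have "\<dots> = V ** (Dr (\<lambda>i. e i powr r) ** W) ** cadjoint U"
    unfolding W_def by (simp add: matrix_mul_assoc)
  also have "\<dots> = V ** (W ** Dr (\<lambda>i. d i powr r)) ** cadjoint U" by (simp add: W2)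
  also have "\<dots> = (V ** cadjoint V) ** U ** Dr (\<lambda>i. d i powr r) ** cadjoint U"
    unfolding W_def by (simp add: matrix_mul_assoc)
  also have "\<dots> = U ** Dr (\<lambda>i. d i powr r) ** cadjoint U" by (simp add: VV)
  finally show ?thesis by simp
qed

lemma mat_rpow_eq:
  fixes U :: "complex^'n^'n"
  assumes U: "unitary U" and d: "\<forall>i. 0 < d i"
  shows "mat_rpow (U ** Dr d ** cadjoint U) r = U ** Dr (\<lambda>i. d i powr r) ** cadjoint U"
proof -
  define P where "P = (\<lambda>Z. \<exists>U' (d' :: 'n \<Rightarrow> real). unitary U' \<and> (\<forall>i. 0 < d' i) \<and>
      U ** Dr d ** cadjoint U = U' ** Dr d' ** cadjoint U' \<and>
      Z = U' ** Dr (\<lambda>i. d' i powr r) ** cadjoint U')"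
  have "P (U ** Dr (\<lambda>i. d i powr r) ** cadjoint U)" unfolding P_def using U d by blast
  hence "P (SOME Z. P Z)" by (rule someI)
  then obtain U' d' where U': "unitary U'" "\<forall>i. 0 < d' i"
    "U ** Dr d ** cadjoint U = U' ** Dr d' ** cadjoint U'"
    "(SOME Z. P Z) = U' ** Dr (\<lambda>i. d' i powr r) ** cadjoint U'" unfolding P_def by blast
  have "mat_rpow (U ** Dr d ** cadjoint U) r = (SOME Z. P Z)"
    unfolding mat_rpow_def P_def dg_def by simp
  also have "\<dots> = U ** Dr (\<lambda>i. d i powr r) ** cadjoint U"
    using rpow_unique[OF U U'(1) d U'(2) U'(3)] U'(4) by simp
  finally show ?thesis .
qed

lemma qform_two:
  fixes M :: "complex^'n^'n"
  assumes pq: "p \<noteq> q"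
  shows "qform M (\<chi> i. if i = p then a else if i = q then b else 0) =
    cnj a * (M$p$p * a + M$p$q * b) + cnj b * (M$q$p * a + M$q$q * b)"
proof -
  let ?y = "(\<chi> i. if i = p then a else if i = q then b else 0) :: complex^'n"
  have mv: "(M *v ?y) $ i = M$i$p * a + M$i$q * b" for i
  proof -
    have "(M *v ?y) $ i = (\<Sum>j\<in>UNIV. (if j = p then M$i$p * a else 0) + (if j = q then M$i$q * b else 0))"
      unfolding matrix_vector_mult_def vec_lambda_beta by (rule sum.cong) (use pq in auto)
    also have "\<dots> = M$i$p * a + M$i$q * b" by (simp add: sum.distrib)
    finally show ?thesis .
  qed
  have "qform M ?y = (\<Sum>i\<in>UNIV. (if i = p then cnj a * (M$p$p * a + M$p$q * b) else 0) +
      (if i = q then cnj b * (M$q$p * a + M$q$q * b) else 0))"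
    unfolding qform_def mv by (rule sum.cong) (use pq in auto)
  also have "\<dots> = cnj a * (M$p$p * a + M$p$q * b) + cnj b * (M$q$p * a + M$q$q * b)"
    by (simp add: sum.distrib)
  finally show ?thesis .
qed

lemma mm_rdistrib: "((A + B) ** C) = (A ** C) + (B ** C)" for A B C :: "complex^'n^'n"
  by (vector matrix_matrix_mult_def sum.distrib[symmetric] field_simps)
lemma mm_ldiff: "(A ** (B - C)) = (A ** B) - (A ** C)" for A B C :: "complex^'n^'n"
  by (vector matrix_matrix_mult_def sum_subtractf[symmetric] field_simps)
lemma mm_rdiff: "((A - B) ** C) = (A ** C) - (B ** C)" for A B C :: "complex^'n^'n"
  by (vector matrix_matrix_mult_def sum_subtractf[symmetric] field_simps)
lemma mm_lscale: "(c *\<^sub>R A) ** B = c *\<^sub>R (A ** B)" for A B :: "complex^'n^'n"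
  by (vector matrix_matrix_mult_def sum_distrib_left scaleR_conv_of_real mult_ac)
lemma mm_rscale: "A ** (c *\<^sub>R B) = c *\<^sub>R (A ** B)" for A B :: "complex^'n^'n"
  by (vector matrix_matrix_mult_def sum_distrib_left scaleR_conv_of_real mult_ac)

lemma scaleR_conj: "c *\<^sub>R (U ** A ** V) = U ** (c *\<^sub>R A) ** (V :: complex^'n^'n)"
  for U A :: "complex^'n^'n"
  by (simp add: mm_lscale mm_rscale)

lemma add_conj: "U ** A ** V + U ** B ** V = U ** (A + B) ** (V :: complex^'n^'n)"
  for U A B :: "complex^'n^'n"
  by (simp add: matrix_add_ldistrib mm_rdistrib)

lemma diff_conj: "U ** A ** V - U ** B ** V = U ** (A - B) ** (V :: complex^'n^'n)"
  for U A B :: "complex^'n^'n"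
  by (simp add: mm_ldiff mm_rdiff)

lemma prod_conj: "(U ** F ** cadjoint U) ** Y ** (U ** F ** cadjoint U) = U ** (F ** (cadjoint U ** Y ** U) ** F) ** cadjoint U"
  for U F Y :: "complex^'n^'n"
  by (simp add: matrix_mul_assoc)



lemma sum_two:
  fixes f :: "'n::finite \<Rightarrow> complex"
  assumes "p \<noteq> q" "\<And>k. k \<noteq> p \<Longrightarrow> k \<noteq> q \<Longrightarrow> f k = 0"
  shows "sum f UNIV = f p + f q"
proof -
  have "sum f UNIV = sum f {p, q}"
    by (rule sum.mono_neutral_right) (use assms in auto)
  then show ?thesis using assms by simp
qed

lemma sum_one:
  fixes f :: "'n::finite \<Rightarrow> complex"
  assumes "\<And>k. k \<noteq> p \<Longrightarrow> f k = 0"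
  shows "sum f UNIV = f p"
proof -
  have "sum f UNIV = sum f {p}"
    by (rule sum.mono_neutral_right) (use assms in auto)
  then show ?thesis by simp
qed

lemma rank_zero_c: "rank (0 :: complex^'n^'m) = 0"
proof -
  have "rows (0 :: complex^'n^'m) = {0}" by (auto simp: rows_def row_def vec_eq_iff)
  then show ?thesis by (simp add: row_rank_def_gen vec.dim_insert vec.span_zero)
qed

lemma rank_mat_c:
  assumes c: "c \<noteq> 0"
  shows "rank (mat c :: complex^'n^'n) = CARD('n)"
proof -
  have "cart_basis \<subseteq> vec.span (rows (mat c :: complex^'n^'n))"
  proof
    fix x :: "complex^'n" assume "x \<in> cart_basis"
    then obtain i where x: "x = axis i 1" by (auto simp: cart_basis_def)
    have r: "row i (mat c :: complex^'n^'n) \<in> rows (mat c)" by (auto simp: rows_def)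
    have "x = (1/c) *s row i (mat c :: complex^'n^'n)"
      using c by (simp add: x vec_eq_iff row_def mat_def axis_def)
    then show "x \<in> vec.span (rows (mat c :: complex^'n^'n))"
      using r by (simp add: vec.span_base vec.span_scale)
  qed
  hence "vec.span (rows (mat c :: complex^'n^'n)) = UNIV"
    by (metis span_cart_basis top.extremum_uniqueI vec.span_minimal vec.subspace_span)
  then have "vec.dim (rows (mat c :: complex^'n^'n)) = vec.dim (UNIV :: (complex^'n) set)"
    by (metis vec.dim_span)
  then show ?thesis by (simp add: row_rank_def_gen vec_dim_card card_cart_basis)
qed

definition rot :: "'n \<Rightarrow> 'n \<Rightarrow> complex^'n^'n" where
  "rot p q = (\<chi> i j. if (i = p \<or> i = q) \<and> (j = p \<or> j = q)
      then (if i = q \<and> j = q then - complex_of_real (1 / sqrt 2) else complex_of_real (1 / sqrt 2))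
      else if i = j then 1 else 0)"

lemma s2: "complex_of_real (1 / sqrt 2) * complex_of_real (1 / sqrt 2) = 1/2"
proof -
  have "(1 / sqrt 2) * (1 / sqrt 2) = (1/2::real)" by (simp add: field_simps)
  then show ?thesis by (metis of_real_mult of_real_divide of_real_1 of_real_numeral)
qed

lemma rot_adj: "cadjoint (rot p q) = rot p q"
  by (auto simp: cadjoint_def rot_def vec_eq_iff)

lemma rot_sq:
  assumes pq: "p \<noteq> q"
  shows "rot p q ** rot p q = mat 1"
proof -
  let ?s = "complex_of_real (1 / sqrt 2)"
  have "(rot p q ** rot p q) $ i $ j = mat 1 $ i $ j" for i j
  proof (cases "i = p \<or> i = q")
    case True
    have "(rot p q ** rot p q) $ i $ j = rot p q $ i $ p * rot p q $ p $ j + rot p q $ i $ q * rot p q $ q $ j"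
      unfolding matrix_matrix_mult_def vec_lambda_beta
      by (rule sum_two[OF pq]) (use True in \<open>auto simp: rot_def\<close>)
    then show ?thesis using True pq s2 by (auto simp: rot_def mat_def)
  next
    case False
    have "(rot p q ** rot p q) $ i $ j = rot p q $ i $ i * rot p q $ i $ j"
      unfolding matrix_matrix_mult_def vec_lambda_beta
      by (rule sum_one) (use False in \<open>auto simp: rot_def\<close>)
    then show ?thesis using False by (auto simp: rot_def mat_def)
  qed
  then show ?thesis by (simp add: vec_eq_iff)
qed

lemma rot_unitary: "p \<noteq> q \<Longrightarrow> unitary (rot p q)"
  by (simp add: unitary_def rot_adj rot_sq)

lemma rot_entry:
  fixes Y :: "complex^'n^'n"
  assumes pq: "p \<noteq> q" and diag: "\<And>i j. i \<noteq> j \<Longrightarrow> Y $ i $ j = 0"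
  shows "(cadjoint (rot p q) ** Y ** rot p q) $ p $ q = (Y $ p $ p - Y $ q $ q) / 2"
proof -
  have a: "(rot p q ** Y) $ p $ l = rot p q $ p $ l * Y $ l $ l" for l
    unfolding matrix_matrix_mult_def vec_lambda_beta
    by (rule sum_one) (use diag in auto)
  have "(rot p q ** Y ** rot p q) $ p $ q = (rot p q ** Y) $ p $ p * rot p q $ p $ q + (rot p q ** Y) $ p $ q * rot p q $ q $ q"
    unfolding matrix_matrix_mult_def[of "rot p q ** Y"] vec_lambda_beta
    by (rule sum_two[OF pq]) (auto simp: rot_def)
  also have "\<dots> = rot p q $ p $ p * Y $ p $ p * rot p q $ p $ q + rot p q $ p $ q * Y $ q $ q * rot p q $ q $ q"
    by (simp only: a)
  also have "\<dots> = (complex_of_real (1 / sqrt 2) * complex_of_real (1 / sqrt 2)) * (Y $ p $ p - Y $ q $ q)"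
  proof -
    have e: "rot p q $ p $ p = complex_of_real (1 / sqrt 2)" "rot p q $ p $ q = complex_of_real (1 / sqrt 2)"
      "rot p q $ q $ q = - complex_of_real (1 / sqrt 2)" using pq by (simp_all add: rot_def)
    have g: "(z::complex) * a * z + z * b * (- z) = (z * z) * (a - b)" for z a b by (simp add: algebra_simps)
    show ?thesis unfolding e by (rule g)
  qed
  also have "\<dots> = (Y $ p $ p - Y $ q $ q) / 2" by (simp only: s2) simp
  finally show ?thesis by (simp add: rot_adj)
qed



lemma main:
  fixes U Y :: "complex^'n^'n" and r :: real
  assumes r: "r < 0 \<or> (0 < r \<and> r < 1)" and U: "unitary U" and pq: "p \<noteq> q"
    and hY: "hermitian Y" and w0: "(cadjoint U ** Y ** U) $ p $ q \<noteq> 0"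
  shows "\<exists>X1 X2 (t::real). posdef X1 \<and> posdef X2 \<and> 0 \<le> t \<and> t \<le> 1 \<and>
    \<not> loewner_le
        (mat_rpow (t *\<^sub>R X1 + (1 - t) *\<^sub>R X2) r ** Y **
         mat_rpow (t *\<^sub>R X1 + (1 - t) *\<^sub>R X2) r)
        (t *\<^sub>R (mat_rpow X1 r ** Y ** mat_rpow X1 r) +
         (1 - t) *\<^sub>R (mat_rpow X2 r ** Y ** mat_rpow X2 r))"
proof -
  define d1 :: "'n \<Rightarrow> real" where "d1 = (\<lambda>i. 1)"
  define d2 :: "'n \<Rightarrow> real" where "d2 = (\<lambda>i. if i = q then 3 else 1)"
  define dm :: "'n \<Rightarrow> real" where "dm = (\<lambda>i. if i = q then 2 else 1)"
  define X1 where "X1 = U ** Dr d1 ** cadjoint U"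
  define X2 where "X2 = U ** Dr d2 ** cadjoint U"
  define Y' where "Y' = cadjoint U ** Y ** U"
  define fa where "fa = (\<lambda>i. d1 i powr r)"
  define fb where "fb = (\<lambda>i. d2 i powr r)"
  define fc where "fc = (\<lambda>i. dm i powr r)"
  define t :: real where "t = 1/2"
  have pos1: "\<forall>i. 0 < d1 i" and pos2: "\<forall>i. 0 < d2 i" and posm: "\<forall>i. 0 < dm i"
    by (auto simp: d1_def d2_def dm_def)
  have mid: "t *\<^sub>R X1 + (1 - t) *\<^sub>R X2 = U ** Dr dm ** cadjoint U"
  proof -
    have "Dr dm = t *\<^sub>R Dr d1 + (1 - t) *\<^sub>R Dr d2"
      by (simp add: vec_eq_iff dg_def d1_def d2_def dm_def t_def; simp add: scaleR_conv_of_real)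
    then show ?thesis unfolding X1_def X2_def by (simp add: scaleR_conj add_conj)
  qed
  have Z1: "mat_rpow X1 r = U ** Dr fa ** cadjoint U"
    unfolding X1_def fa_def by (rule mat_rpow_eq[OF U pos1])
  have Z2: "mat_rpow X2 r = U ** Dr fb ** cadjoint U"
    unfolding X2_def fb_def by (rule mat_rpow_eq[OF U pos2])
  have Zm: "mat_rpow (t *\<^sub>R X1 + (1 - t) *\<^sub>R X2) r = U ** Dr fc ** cadjoint U"
    unfolding mid fc_def by (rule mat_rpow_eq[OF U posm])
  define M where "M = t *\<^sub>R (Dr fa ** Y' ** Dr fa) + (1 - t) *\<^sub>R (Dr fb ** Y' ** Dr fb)
      - Dr fc ** Y' ** Dr fc"
  have diff: "(t *\<^sub>R (mat_rpow X1 r ** Y ** mat_rpow X1 r) +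
         (1 - t) *\<^sub>R (mat_rpow X2 r ** Y ** mat_rpow X2 r)) -
       (mat_rpow (t *\<^sub>R X1 + (1 - t) *\<^sub>R X2) r ** Y **
         mat_rpow (t *\<^sub>R X1 + (1 - t) *\<^sub>R X2) r) = U ** M ** cadjoint U"
    unfolding Z1 Z2 Zm prod_conj M_def Y'_def by (simp add: scaleR_conj add_conj diff_conj)
  define K where "K = (\<lambda>i j. t * fa i * fa j + (1 - t) * fb i * fb j - fc i * fc j)"
  have Ment: "M $ i $ j = Y' $ i $ j * complex_of_real (K i j)" for i j
    unfolding M_def K_def by (simp add: dg_left dg_right; simp add: scaleR_conv_of_real algebra_simps)
  define \<kappa> where "\<kappa> = 1/2 + 3 powr r / 2 - 2 powr r"
  have \<kappa>0: "\<kappa> \<noteq> 0" unfolding \<kappa>_def by (rule kappa_ne[OF r])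
  have Kpp: "K p p = 0" and Kpq: "K p q = \<kappa>" and Kqp: "K q p = \<kappa>"
    using pq by (auto simp: K_def fa_def fb_def fc_def d1_def d2_def dm_def t_def \<kappa>_def)
  define w where "w = Y' $ p $ q"
  have w: "w \<noteq> 0" using w0 by (simp add: w_def Y'_def)
  have hY': "cadjoint Y' = Y'" using hY unfolding Y'_def hermitian_def
    by (simp add: cadjoint_mult matrix_mul_assoc)
  have wqp: "Y' $ q $ p = cnj w"
    using arg_cong[OF hY', of "\<lambda>A. A $ q $ p"] by (simp add: cadjoint_def w_def)
  define c where "c = Re (Y' $ q $ q) * K q q"
  define W where "W = (cmod w)^2"
  have W: "W > 0" using w by (simp add: W_def)
  define lam where "lam = - (\<bar>c\<bar> + 1) / (2 * \<kappa> * W)"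
  define y :: "complex^'n" where "y = (\<chi> i. if i = p then complex_of_real lam * w else if i = q then 1 else 0)"
  have wcw: "cnj w * w = complex_of_real W"
    unfolding W_def using complex_norm_square[of w] by (simp add: mult.commute)
  have "qform M y = cnj (complex_of_real lam * w) * (M$p$p * (complex_of_real lam * w) + M$p$q * 1)
      + cnj 1 * (M$q$p * (complex_of_real lam * w) + M$q$q * 1)"
    unfolding y_def by (rule qform_two[OF pq])
  also have "\<dots> = complex_of_real (2 * lam * \<kappa> * W) + Y' $ q $ q * complex_of_real (K q q)"
    using wcw by (simp add: Ment Kpp Kpq Kqp wqp w_def[symmetric] algebra_simps)
  finally have qf: "Re (qform M y) = 2 * lam * \<kappa> * W + c" by (simp add: c_def)
  have "2 * lam * \<kappa> * W = - (\<bar>c\<bar> + 1)" using \<kappa>0 W by (simp add: lam_def field_simps)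
  hence neg: "Re (qform M y) < 0" using qf by linarith
  have nl: "\<not> loewner_le
        (mat_rpow (t *\<^sub>R X1 + (1 - t) *\<^sub>R X2) r ** Y **
         mat_rpow (t *\<^sub>R X1 + (1 - t) *\<^sub>R X2) r)
        (t *\<^sub>R (mat_rpow X1 r ** Y ** mat_rpow X1 r) +
         (1 - t) *\<^sub>R (mat_rpow X2 r ** Y ** mat_rpow X2 r))"
  proof
    assume "loewner_le
        (mat_rpow (t *\<^sub>R X1 + (1 - t) *\<^sub>R X2) r ** Y **
         mat_rpow (t *\<^sub>R X1 + (1 - t) *\<^sub>R X2) r)
        (t *\<^sub>R (mat_rpow X1 r ** Y ** mat_rpow X1 r) +
         (1 - t) *\<^sub>R (mat_rpow X2 r ** Y ** mat_rpow X2 r))"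
    hence "psd (U ** M ** cadjoint U)" unfolding loewner_le_def diff .
    hence "0 \<le> Re (qform (U ** M ** cadjoint U) (U *v y))" unfolding psd_def by blast
    also have "qform (U ** M ** cadjoint U) (U *v y) = qform M y"
      by (simp add: qform_conj[OF U] unitary_vec[OF U])
    finally show False using neg by simp
  qed
  show ?thesis
    apply (rule exI[of _ X1], rule exI[of _ X2], rule exI[of _ t])
    using nl posdef_conj[OF U pos1] posdef_conj[OF U pos2]
    by (simp add: X1_def X2_def t_def)
qed

theorem lemma3p4:
  fixes r :: real and Y :: "complex^'n^'n"
  assumes "r < 0 \<or> (0 < r \<and> r < 1)"
    and "CARD('n) \<ge> 2"
    and "psd Y" and "rank Y = 1"
  shows "\<exists>X1 X2 (t::real). posdef X1 \<and> posdef X2 \<and> 0 \<le> t \<and> t \<le> 1 \<and>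
    \<not> loewner_le
        (mat_rpow (t *\<^sub>R X1 + (1 - t) *\<^sub>R X2) r ** Y **
         mat_rpow (t *\<^sub>R X1 + (1 - t) *\<^sub>R X2) r)
        (t *\<^sub>R (mat_rpow X1 r ** Y ** mat_rpow X1 r) +
         (1 - t) *\<^sub>R (mat_rpow X2 r ** Y ** mat_rpow X2 r))"
proof -
  have hY: "hermitian Y" using assms(3) by (simp add: psd_def)
  obtain U :: "complex^'n^'n" and p q where U: "unitary U" "p \<noteq> q" "(cadjoint U ** Y ** U) $ p $ q \<noteq> 0"
  proof (cases "\<exists>p q. p \<noteq> q \<and> Y $ p $ q \<noteq> 0")
    case True
    then obtain p q where "p \<noteq> q" "Y $ p $ q \<noteq> 0" by blast
    then show ?thesis using that[of "mat 1" p q] unitary_mat1 by simp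
  next
    case False
    hence diag: "\<And>i j. i \<noteq> j \<Longrightarrow> Y $ i $ j = 0" by blast
    have "\<exists>p q. p \<noteq> q \<and> Y $ p $ p \<noteq> Y $ q $ q"
    proof (rule ccontr)
      assume "\<not> (\<exists>p q. p \<noteq> q \<and> Y $ p $ p \<noteq> Y $ q $ q)"
      hence eq: "Y $ p' $ p' = Y $ q' $ q'" for p' q' by (cases "p' = q'") auto
      have "\<not> CARD('n) \<le> Suc 0" using assms(2) by simp
      then obtain a b :: 'n where ab: "a \<noteq> b" using card_le_Suc0_iff_eq[of "UNIV :: 'n set"] by auto
      have Ym: "Y = mat (Y $ a $ a)" using diag eq by (auto simp: vec_eq_iff mat_def)
      show False
      proof (cases "Y $ a $ a = 0")
        case True
        then have "Y = 0" using Ym by simp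
        moreover have "rank (0::complex^'n^'n) = 0" by (rule rank_zero_c)
        ultimately show False using assms(4) by simp
      next
        case False
        have "rank Y = CARD('n)" by (subst Ym, rule rank_mat_c[OF False])
        then show False using assms(2,4) by simp
      qed
    qed
    then obtain p q where pq: "p \<noteq> q" "Y $ p $ p \<noteq> Y $ q $ q" by blast
    show ?thesis using that[of "rot p q" p q] rot_unitary[OF pq(1)] rot_entry[OF pq(1) diag] pq by simp
  qed
  show ?thesis by (rule main[OF assms(1) U(1) U(2) hY U(3)])
qed

end
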